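(* For $v\in(0,1)$ and $x\in[\phi(v),\phi(v+)]$, the function $\psi_{v,x}$ is non-increasing and absolutely continuous on $[v,1]$.
   Context: Let $\mu,\nu$ be probability measures on $\mathbb R$ with finite first moments and $\mu\le_{cx}\nu$. Put $P_\eta(k)=\int(k-x)^+\eta(dx)$, $D=P_\nu-P_\mu$, and assume $\{k:D(k)>0\}$ is an interval. Let $G$ be the left-continuous quantile function of $\mu$. For $u\in(0,1)$ let $\mu_u(A)=\mu(A\cap(-\infty,G(u)))+\big(u-\mu((-\infty,G(u)))\big)\delta_{G(u)}(A)$ and $\mathcal E_u=P_\nu-P_{\mu_u}$. $f^c$ is the largest convex minorant of $f$. Define $\phi(u)=\inf\partial\mathcal E_u^c(G(u))$ for $u\in(0,1)$, $\phi(1)=0$, and $\phi(v+)=\lim_{w\downarrow v}\phi(w)$ (this limit exists). For $v\in(0,1)$, $x\in[0,1)$ define $\psi_{v,x}:[v,1]\to[0,1]$ by $\psi_{v,x}(w)=x\wedge\inf_{v<u\le w}\phi(u)$. *)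

theory Defs
  imports "HOL-Probability.Probability"
begin

definition real_prob_fm :: "real measure \<Rightarrow> bool" where
  "real_prob_fm \<eta> \<longleftrightarrow> prob_space \<eta> \<and> sets \<eta> = sets borel \<and> integrable \<eta> (\<lambda>x. x)"

definition convex_order :: "real measure \<Rightarrow> real measure \<Rightarrow> bool" where
  "convex_order \<mu> \<nu> \<longleftrightarrow>
     (\<forall>f::real \<Rightarrow> real. convex_on UNIV f \<longrightarrow> integrable \<mu> f \<longrightarrow> integrable \<nu> f \<longrightarrow>
        integral\<^sup>L \<mu> f \<le> integral\<^sup>L \<nu> f)"

definition put_price :: "real measure \<Rightarrow> real \<Rightarrow> real" where
  "put_price \<eta> k = integral\<^sup>L \<eta> (\<lambda>x. max (k - x) 0)"

definition quantile :: "real measure \<Rightarrow> real \<Rightarrow> real" where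
  "quantile \<mu> u = Inf {x. measure \<mu> {..x} \<ge> u}"

definition mu_u :: "real measure \<Rightarrow> real \<Rightarrow> real measure" where
  "mu_u \<mu> u = measure_of UNIV (sets borel)
     (\<lambda>A. emeasure \<mu> (A \<inter> {..<quantile \<mu> u})
          + ennreal ((u - measure \<mu> {..<quantile \<mu> u}) * indicator A (quantile \<mu> u)))"

definition E_u :: "real measure \<Rightarrow> real measure \<Rightarrow> real \<Rightarrow> real \<Rightarrow> real" where
  "E_u \<mu> \<nu> u k = put_price \<nu> k - put_price (mu_u \<mu> u) k"

definition convex_minorant :: "(real \<Rightarrow> real) \<Rightarrow> real \<Rightarrow> real" where
  "convex_minorant f x = Sup {g x | g. convex_on UNIV g \<and> (\<forall>y. g y \<le> f y)}"

definition subdiff :: "(real \<Rightarrow> real) \<Rightarrow> real \<Rightarrow> real set" where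
  "subdiff f x = {s. \<forall>y. f x + s * (y - x) \<le> f y}"

definition phi :: "real measure \<Rightarrow> real measure \<Rightarrow> real \<Rightarrow> real" where
  "phi \<mu> \<nu> u = (if u = 1 then 0
      else Inf (subdiff (convex_minorant (E_u \<mu> \<nu> u)) (quantile \<mu> u)))"

definition phi_plus :: "real measure \<Rightarrow> real measure \<Rightarrow> real \<Rightarrow> real" where
  "phi_plus \<mu> \<nu> v = Lim (at_right v) (phi \<mu> \<nu>)"

text \<open>\<open>\<psi>_{v,x}(w) = x \<and> inf_{v<u\<le>w} \<phi>(u)\<close>; the infimum over the empty set (w = v) is \<open>+\<infinity>\<close>.\<close>
definition psi :: "real measure \<Rightarrow> real measure \<Rightarrow> real \<Rightarrow> real \<Rightarrow> real \<Rightarrow> real" where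
  "psi \<mu> \<nu> v x w = (if w \<le> v then x else min x (INF u\<in>{v<..w}. phi \<mu> \<nu> u))"

definition abs_continuous_on :: "real \<Rightarrow> real \<Rightarrow> (real \<Rightarrow> real) \<Rightarrow> bool" where
  "abs_continuous_on a b f \<longleftrightarrow>
    (\<forall>\<epsilon>>0. \<exists>\<delta>>0. \<forall>(n::nat) (I::nat \<Rightarrow> real \<times> real).
       (\<forall>i<n. a \<le> fst (I i) \<and> fst (I i) \<le> snd (I i) \<and> snd (I i) \<le> b) \<and>
       (\<forall>i<n. \<forall>j<n. i \<noteq> j \<longrightarrow> {fst (I i)<..<snd (I i)} \<inter> {fst (I j)<..<snd (I j)} = {}) \<and>
       (\<Sum>i<n. snd (I i) - fst (I i)) < \<delta>
       \<longrightarrow> (\<Sum>i<n. \<bar>f (snd (I i)) - f (fst (I i))\<bar>) < \<epsilon>)"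

end

theory Submission
  imports Defs
begin


definition has_minorant :: "(real \<Rightarrow> real) \<Rightarrow> bool" where
  "has_minorant f \<longleftrightarrow> (\<exists>c. convex_on UNIV c \<and> (\<forall>y. c y \<le> f y))"

lemma cm_le:
  assumes "has_minorant f" shows "convex_minorant f x \<le> f x"
proof -
  obtain c where c: "convex_on UNIV c" "\<forall>y. c y \<le> f y" using assms has_minorant_def by blast
  show ?thesis unfolding convex_minorant_def
    by (rule cSup_least) (use c in auto)
qed

lemma cm_ge:
  assumes "convex_on UNIV c" "\<forall>y. c y \<le> f y" shows "c x \<le> convex_minorant f x"
  unfolding convex_minorant_def
  by (rule cSup_upper) (use assms in \<open>auto simp: bdd_above_def\<close>)

lemma cm_convex:
  assumes "has_minorant f" shows "convex_on UNIV (convex_minorant f)"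
proof (rule convex_on_linorderI)
  fix t x y :: real assume t: "0 < t" "t < 1"
  obtain c where c: "convex_on UNIV c" "\<forall>y. c y \<le> f y" using assms has_minorant_def by blast
  show "convex_minorant f ((1 - t) *\<^sub>R x + t *\<^sub>R y) \<le> (1 - t) * convex_minorant f x + t * convex_minorant f y"
    unfolding convex_minorant_def[of f "(1 - t) *\<^sub>R x + t *\<^sub>R y"]
  proof (rule cSup_least)
    show "{g ((1 - t) *\<^sub>R x + t *\<^sub>R y) |g. convex_on UNIV g \<and> (\<forall>y. g y \<le> f y)} \<noteq> {}" using c by auto
  next
    fix z assume "z \<in> {g ((1 - t) *\<^sub>R x + t *\<^sub>R y) |g. convex_on UNIV g \<and> (\<forall>y. g y \<le> f y)}"
    then obtain g where g: "convex_on UNIV g" "\<forall>y. g y \<le> f y" and z: "z = g ((1 - t) *\<^sub>R x + t *\<^sub>R y)" by blast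
    have "z \<le> (1 - t) * g x + t * g y" unfolding z using g(1) t
      by (intro convex_onD) auto
    also have "\<dots> \<le> (1 - t) * convex_minorant f x + t * convex_minorant f y"
      using cm_ge[OF g] t by (intro add_mono mult_left_mono) auto
    finally show "z \<le> (1 - t) * convex_minorant f x + t * convex_minorant f y" .
  qed
qed auto

lemma subgrad_exists:
  fixes g :: "real \<Rightarrow> real"
  assumes g: "convex_on UNIV g" shows "\<exists>s. s \<in> subdiff g a"
proof -
  define S where "S = {(g a - g y) / (a - y) | y. y < a}"
  have ne: "S \<noteq> {}" unfolding S_def by (auto intro!: exI[of _ "a - 1"])
  have ub: "s \<le> (g z - g a) / (z - a)" if "s \<in> S" "z > a" for s z
  proof -
    obtain y where y: "y < a" "s = (g a - g y) / (a - y)" using \<open>s \<in> S\<close> S_def by auto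
    have "(g y - g a) / (y - a) \<le> (g y - g z) / (y - z)"
      using convex_on_slope_le(1)[OF g _ _ y(1) that(2)] by auto
    also have "\<dots> \<le> (g a - g z) / (a - z)"
      using convex_on_slope_le(2)[OF g _ _ y(1) that(2)] by auto
    finally show ?thesis using y
      by (smt (verit, ccfv_SIG) minus_divide_divide)
  qed
  have bdd: "bdd_above S" using ub[of _ "a+1"] by (auto simp: bdd_above_def)
  define s where "s = Sup S"
  have "s \<in> subdiff g a" unfolding subdiff_def
  proof (safe)
    fix y
    consider "y < a" | "y = a" | "y > a" by linarith
    then show "g a + s * (y - a) \<le> g y"
    proof cases
      case 1
      have "(g a - g y) / (a - y) \<le> s" unfolding s_def
        by (rule cSup_upper[OF _ bdd]) (use 1 S_def in auto)
      then have "g a - g y \<le> s * (a - y)" using 1 by (simp add: divide_le_eq)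
      then show ?thesis by (simp add: algebra_simps)
    next
      case 2 then show ?thesis by simp
    next
      case 3
      have "s \<le> (g y - g a) / (y - a)" unfolding s_def
        by (rule cSup_least[OF ne]) (use ub 3 in auto)
      then have "s * (y - a) \<le> g y - g a" using 3 by (simp add: le_divide_eq)
      then show ?thesis by (simp add: algebra_simps)
    qed
  qed
  then show ?thesis by blast
qed

lemma subdiff_iff: "s \<in> subdiff g a \<longleftrightarrow> (\<forall>y. g a + s * (y - a) \<le> g y)"
  by (simp add: subdiff_def)

lemma subdiff_bdd_below: "bdd_below (subdiff g a)"
proof (rule bdd_belowI)
  fix s assume "s \<in> subdiff g a"
  then have "g a + s * ((a - 1) - a) \<le> g (a - 1)" unfolding subdiff_iff by blast
  then show "g a - g (a - 1) \<le> s" by simp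
qed

lemma Inf_subdiff:
  fixes g :: "real \<Rightarrow> real"
  assumes g: "convex_on UNIV g" shows "Inf (subdiff g a) \<in> subdiff g a"
proof -
  obtain s0 where s0: "s0 \<in> subdiff g a" using subgrad_exists[OF g] by blast
  have ne: "subdiff g a \<noteq> {}" using s0 by auto
  show ?thesis unfolding subdiff_iff
  proof (safe)
    fix y
    show "g a + Inf (subdiff g a) * (y - a) \<le> g y"
    proof (cases "y < a")
      case True
      have "(g a - g y) / (a - y) \<le> Inf (subdiff g a)"
      proof (rule cInf_greatest[OF ne])
        fix s assume "s \<in> subdiff g a"
        then have "g a + s * (y - a) \<le> g y" by (auto simp: subdiff_def)
        then have "g a - g y \<le> s * (a - y)" by (simp add: algebra_simps)
        then show "(g a - g y) / (a - y) \<le> s" using True by (simp add: divide_le_eq)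
      qed
      then have "g a - g y \<le> Inf (subdiff g a) * (a - y)" using True by (simp add: divide_le_eq)
      then show ?thesis by (simp add: algebra_simps)
    next
      case False
      have "Inf (subdiff g a) \<le> s0" by (rule cInf_lower[OF s0 subdiff_bdd_below])
      then have "g a + Inf (subdiff g a) * (y - a) \<le> g a + s0 * (y - a)"
        using False by (intro add_left_mono mult_right_mono) auto
      also have "\<dots> \<le> g y" using s0 by (auto simp: subdiff_def)
      finally show ?thesis .
    qed
  qed
qed

lemma Inf_subdiff_le:
  "s \<in> subdiff g a \<Longrightarrow> Inf (subdiff g a) \<le> s"
  by (rule cInf_lower[OF _ subdiff_bdd_below])

lemma affine_convex: "convex_on UNIV (\<lambda>y::real. A + B * y)"
  by (rule convex_on_linorderI) (auto simp: algebra_simps)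

lemma line_le_cm:
  assumes "\<forall>y. A + B * (y - a) \<le> f y"
  shows "A \<le> convex_minorant f a"
proof -
  have "convex_on UNIV (\<lambda>y. (A - B * a) + B * y)" by (rule affine_convex)
  moreover have "\<forall>y. (A - B * a) + B * y \<le> f y" using assms by (auto simp: algebra_simps)
  ultimately have "(A - B * a) + B * a \<le> convex_minorant f a" by (rule cm_ge)
  then show ?thesis by simp
qed

lemma line_subdiff:
  assumes "has_minorant f" "\<forall>y. convex_minorant f a + B * (y - a) \<le> f y"
  shows "B \<in> subdiff (convex_minorant f) a"
proof -
  have "convex_on UNIV (\<lambda>y. (convex_minorant f a - B * a) + B * y)" by (rule affine_convex)
  moreover have "\<forall>y. (convex_minorant f a - B * a) + B * y \<le> f y" using assms by (auto simp: algebra_simps)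
  ultimately have "\<forall>y. (convex_minorant f a - B * a) + B * y \<le> convex_minorant f y" using cm_ge by blast
  then show ?thesis by (auto simp: subdiff_def algebra_simps)
qed


lemma swap:
  fixes E1 E2 :: "real \<Rightarrow> real"
  assumes h1: "has_minorant E1" and h2: "has_minorant E2"
    and ab: "a \<le> b" and d: "0 \<le> \<delta>"
    and lip: "\<And>j k. j \<le> k \<Longrightarrow> (E1 k - E2 k) - (E1 j - E2 j) \<le> \<delta> * (k - j)"
  shows "Inf (subdiff (convex_minorant E1) a) \<le> Inf (subdiff (convex_minorant E2) b) + \<delta>"
proof (rule ccontr)
  define g1 where "g1 = convex_minorant E1"
  define g2 where "g2 = convex_minorant E2"
  define \<sigma> where "\<sigma> = Inf (subdiff g1 a)"
  define \<tau> where "\<tau> = Inf (subdiff g2 b)"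
  assume "\<not> ?thesis"
  then have lt: "\<tau> + \<delta> < \<sigma>" unfolding \<sigma>_def \<tau>_def g1_def g2_def by simp
  have s1: "\<sigma> \<in> subdiff g1 a" unfolding \<sigma>_def g1_def by (rule Inf_subdiff[OF cm_convex[OF h1]])
  have s2: "\<tau> \<in> subdiff g2 b" unfolding \<tau>_def g2_def by (rule Inf_subdiff[OF cm_convex[OF h2]])
  have sig: "g1 a + \<sigma> * (y - a) \<le> E1 y" for y
    using s1 cm_le[OF h1, of y] unfolding subdiff_iff g1_def by (smt (verit))
  have tau: "g2 b + \<tau> * (y - b) \<le> E2 y" for y
    using s2 cm_le[OF h2, of y] unfolding subdiff_iff g2_def by (smt (verit))
  have "\<not> (\<forall>y. g1 a + (\<tau> + \<delta>) * (y - a) \<le> E1 y)"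
  proof
    assume "\<forall>y. g1 a + (\<tau> + \<delta>) * (y - a) \<le> E1 y"
    then have "\<tau> + \<delta> \<in> subdiff g1 a" unfolding g1_def by (rule line_subdiff[OF h1])
    then have "\<sigma> \<le> \<tau> + \<delta>" unfolding \<sigma>_def by (rule Inf_subdiff_le)
    then show False using lt by simp
  qed
  then obtain j where j: "E1 j < g1 a + (\<tau> + \<delta>) * (j - a)" by (auto simp: not_le)
  define \<epsilon> where "\<epsilon> = g1 a + (\<tau> + \<delta>) * (j - a) - E1 j"
  have epos: "\<epsilon> > 0" using j \<epsilon>_def by simp
  have "\<forall>k. (g2 b + \<epsilon>) + (\<sigma> - \<delta>) * (k - b) \<le> E2 k"
  proof
    fix k
    show "(g2 b + \<epsilon>) + (\<sigma> - \<delta>) * (k - b) \<le> E2 k"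
    proof (cases "k \<le> j + (b - a)")
      case True
      have P: "0 \<le> (\<sigma> - \<tau> - \<delta>) * ((j - a) - (k - b))" using True lt by simp
      show ?thesis using P tau[of k] sig[of j] unfolding \<epsilon>_def by (simp add: algebra_simps)
    next
      case False
      have jk: "j \<le> k" using False ab by simp
      have P: "0 \<le> (\<sigma> - \<tau> - \<delta>) * (b - a)" using ab lt by simp
      show ?thesis using P tau[of j] sig[of k] lip[OF jk] unfolding \<epsilon>_def by (simp add: algebra_simps)
    qed
  qed
  then have "g2 b + \<epsilon> \<le> g2 b" unfolding g2_def by (rule line_le_cm)
  then show False using epos by simp
qed



lemma final_part:
  fixes \<phi> :: "real \<Rightarrow> real" and v x :: real
  assumes v: "0 < v" "v < 1"
    and P: "\<And>u w. v \<le> u \<Longrightarrow> u \<le> w \<Longrightarrow> w \<le> 1 \<Longrightarrow> \<phi> u \<le> \<phi> w + (w - u)"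
    and xL: "x \<le> Lim (at_right v) \<phi>"
    and psi: "\<And>w. p w = (if w \<le> v then x else min x (INF u\<in>{v<..w}. \<phi> u))"
  shows "(\<forall>a b. v \<le> a \<longrightarrow> a \<le> b \<longrightarrow> b \<le> 1 \<longrightarrow> p b \<le> p a)
       \<and> abs_continuous_on v 1 p"
proof -
  define h where "h u = \<phi> u + u" for u
  define I where "I = (INF u\<in>{v<..<1}. h u)"
  have hmono: "h u \<le> h w" if "v \<le> u" "u \<le> w" "w \<le> 1" for u w
    using P[OF that] unfolding h_def by simp
  have bddh: "bdd_below (h ` {v<..<1})"
    using hmono[of v] by (auto intro!: bdd_belowI[of _ "h v"])
  have ne: "{v<..<1} \<noteq> {}" using v by auto
  have lim: "(\<phi> \<longlongrightarrow> I - v) (at_right v)"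
    unfolding tendsto_iff
  proof (intro allI impI)
    fix e :: real assume e: "e > 0"
    have "I < I + e/2" using e by simp
    then obtain u0 where u0: "u0 \<in> {v<..<1}" "h u0 < I + e/2"
      unfolding I_def using cINF_less_iff[OF ne bddh] by blast
    show "\<forall>\<^sub>F u in at_right v. dist (\<phi> u) (I - v) < e"
      unfolding eventually_at_right_field
    proof (intro exI[of _ "min u0 (v + e/2)"] conjI allI impI)
      show "v < min u0 (v + e/2)" using u0 e by auto
      fix u assume u: "v < u" "u < min u0 (v + e / 2)"
      have "I \<le> h u" unfolding I_def using u u0 by (intro cINF_lower[OF bddh]) auto
      moreover have "h u \<le> h u0" using u u0 by (intro hmono) auto
      ultimately show "dist (\<phi> u) (I - v) < e" using u u0 unfolding dist_real_def h_def by auto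
    qed
  qed
  have Lim_eq: "Lim (at_right v) \<phi> = I - v"
    by (rule tendsto_Lim[OF trivial_limit_at_right_real lim])
  have key: "x - (u - v) \<le> \<phi> u" if "v < u" "u \<le> 1" for u
  proof -
    define u' where "u' = (v + u) / 2"
    have u': "v < u'" "u' < u" "u' < 1" using that unfolding u'_def by auto
    have "I \<le> h u'" unfolding I_def using u' by (intro cINF_lower[OF bddh]) auto
    also have "\<dots> \<le> h u" using u' that by (intro hmono) auto
    finally show ?thesis using xL Lim_eq unfolding h_def by simp
  qed
  have bddphi: "bdd_below (\<phi> ` {v<..w})" if "w \<le> 1" for w
  proof (rule bdd_belowI[of _ "\<phi> v - 1"])
    fix y assume "y \<in> \<phi> ` {v<..w}"
    then obtain u where u: "v < u" "u \<le> w" "y = \<phi> u" by auto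
    then show "\<phi> v - 1 \<le> y" using P[of v u] that v by auto
  qed
  have pv: "p v = x" using psi by simp
  have mono: "p b \<le> p a" if ab: "v \<le> a" "a \<le> b" "b \<le> 1" for a b
  proof (cases "b \<le> v")
    case True then show ?thesis using ab psi by simp
  next
    case b: False
    show ?thesis
    proof (cases "a \<le> v")
      case True then show ?thesis using b psi by simp
    next
      case False
      have "(INF u\<in>{v<..b}. \<phi> u) \<le> (INF u\<in>{v<..a}. \<phi> u)"
        using False ab by (intro cINF_superset_mono bddphi) auto
      then show ?thesis using False b psi by (simp add: min.coboundedI2 min_le_iff_disj)
    qed
  qed
  have lip: "p a - p b \<le> b - a" if ab: "v \<le> a" "a \<le> b" "b \<le> 1" for a b
  proof (cases "b \<le> v")
    case True then show ?thesis using ab psi by simp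
  next
    case b: False
    have neb: "{v<..b} \<noteq> {}" using b by auto
    show ?thesis
    proof (cases "a \<le> v")
      case True
      have "x - (b - v) \<le> (INF u\<in>{v<..b}. \<phi> u)"
      proof (rule cINF_greatest[OF neb])
        fix u assume "u \<in> {v<..b}"
        then show "x - (b - v) \<le> \<phi> u" using key[of u] ab by auto
      qed
      then show ?thesis using True b psi ab by auto
    next
      case False
      have nea: "{v<..a} \<noteq> {}" using False by auto
      have pa: "p a \<le> (INF u\<in>{v<..a}. \<phi> u)" using False psi by simp
      have "p a - (b - a) \<le> (INF u\<in>{v<..b}. \<phi> u)"
      proof (rule cINF_greatest[OF neb])
        fix u assume u: "u \<in> {v<..b}"
        show "p a - (b - a) \<le> \<phi> u"
        proof (cases "u \<le> a")
          case True
          have "(INF u\<in>{v<..a}. \<phi> u) \<le> \<phi> u" using True u ab by (intro cINF_lower bddphi) auto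
          then show ?thesis using pa ab by simp
        next
          case ua: False
          have "(INF u\<in>{v<..a}. \<phi> u) \<le> \<phi> a" using False ab by (intro cINF_lower bddphi) auto
          moreover have "\<phi> a \<le> \<phi> u + (u - a)" using ua u ab by (intro P) auto
          ultimately show ?thesis using pa u by auto
        qed
      qed
      moreover have "p a \<le> x" using False psi by simp
      moreover have "p b = min x (INF u\<in>{v<..b}. \<phi> u)" using b psi by simp
      ultimately show ?thesis using ab by (simp add: min_def)
    qed
  qed
  have ac: "abs_continuous_on v 1 p"
    unfolding abs_continuous_on_def
  proof (intro allI impI)
    fix \<epsilon> :: real assume e: "\<epsilon> > 0"
    show "\<exists>\<delta>>0. \<forall>(n::nat) (I::nat \<Rightarrow> real \<times> real).
       (\<forall>i<n. v \<le> fst (I i) \<and> fst (I i) \<le> snd (I i) \<and> snd (I i) \<le> 1) \<and>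
       (\<forall>i<n. \<forall>j<n. i \<noteq> j \<longrightarrow> {fst (I i)<..<snd (I i)} \<inter> {fst (I j)<..<snd (I j)} = {}) \<and>
       (\<Sum>i<n. snd (I i) - fst (I i)) < \<delta>
       \<longrightarrow> (\<Sum>i<n. \<bar>p (snd (I i)) - p (fst (I i))\<bar>) < \<epsilon>"
    proof (intro exI[of _ \<epsilon>] conjI e allI impI)
      fix n :: nat and J :: "nat \<Rightarrow> real \<times> real"
      assume H: "(\<forall>i<n. v \<le> fst (J i) \<and> fst (J i) \<le> snd (J i) \<and> snd (J i) \<le> 1) \<and>
       (\<forall>i<n. \<forall>j<n. i \<noteq> j \<longrightarrow> {fst (J i)<..<snd (J i)} \<inter> {fst (J j)<..<snd (J j)} = {}) \<and>
       (\<Sum>i<n. snd (J i) - fst (J i)) < \<epsilon>"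
      have "(\<Sum>i<n. \<bar>p (snd (J i)) - p (fst (J i))\<bar>) \<le> (\<Sum>i<n. snd (J i) - fst (J i))"
      proof (rule sum_mono)
        fix i assume "i \<in> {..<n}"
        then have i: "v \<le> fst (J i)" "fst (J i) \<le> snd (J i)" "snd (J i) \<le> 1" using H by auto
        show "\<bar>p (snd (J i)) - p (fst (J i))\<bar> \<le> snd (J i) - fst (J i)"
          using mono[OF i] lip[OF i] by auto
      qed
      then show "(\<Sum>i<n. \<bar>p (snd (J i)) - p (fst (J i))\<bar>) < \<epsilon>" using H by linarith
    qed
  qed
  show ?thesis using mono ac by blast
qed



context real_distribution
begin

lemma q_ne: assumes "u < 1" shows "{x. u \<le> measure M {..x}} \<noteq> {}"
proof -
  have "\<forall>\<^sub>F x in at_top. u < cdf M x" using order_tendstoD(1)[OF cdf_lim_at_top_prob assms] .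
  then obtain N where "\<forall>x\<ge>N. u < cdf M x" by (auto simp: eventually_at_top_linorder)
  then show ?thesis by (auto simp: cdf_def2 intro!: exI[of _ N] less_imp_le)
qed

lemma q_bdd: assumes "0 < u" shows "bdd_below {x. u \<le> measure M {..x}}"
proof -
  have "\<forall>\<^sub>F x in at_bot. cdf M x < u" using order_tendstoD(2)[OF cdf_lim_at_bot assms] .
  then obtain N where N: "\<forall>x\<le>N. cdf M x < u" by (auto simp: eventually_at_bot_linorder)
  show ?thesis
  proof (rule bdd_belowI[of _ N])
    fix x assume "x \<in> {x. u \<le> measure M {..x}}"
    then have "u \<le> cdf M x" by (simp add: cdf_def2)
    then show "N \<le> x" using N by (meson linorder_not_le not_less_iff_gr_or_eq order_le_less_trans)
  qed
qed

lemma q_cdf_ge: assumes "0 < u" "u < 1" shows "u \<le> measure M {..quantile M u}"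
proof -
  define G where "G = quantile M u"
  have "\<forall>\<^sub>F y in at_right G. u \<le> cdf M y"
    unfolding eventually_at_right_field
  proof (intro exI[of _ "G + 1"] conjI allI impI)
    fix y assume y: "G < y"
    then obtain x where x: "u \<le> measure M {..x}" "x < y"
      using cInf_less_iff[OF q_ne[OF assms(2)] q_bdd[OF assms(1)]] unfolding G_def quantile_def by auto
    then show "u \<le> cdf M y" using cdf_nondecreasing[of x y] by (simp add: cdf_def2)
  qed simp
  moreover have "(cdf M \<longlongrightarrow> cdf M G) (at_right G)"
    using cdf_is_right_cont by (simp add: continuous_within)
  ultimately have "u \<le> cdf M G" by (intro tendsto_lowerbound) auto
  then show ?thesis by (simp add: cdf_def2 G_def)
qed

lemma q_left: assumes "0 < u" "u < 1" shows "measure M {..<quantile M u} \<le> u"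
proof -
  define G where "G = quantile M u"
  have "\<forall>\<^sub>F y in at_left G. cdf M y \<le> u"
    unfolding eventually_at_left_field
  proof (intro exI[of _ "G - 1"] conjI allI impI)
    fix y assume y: "y < G"
    show "cdf M y \<le> u"
    proof (rule ccontr)
      assume "\<not> cdf M y \<le> u"
      then have "y \<in> {x. u \<le> measure M {..x}}" by (simp add: cdf_def2)
      then have "G \<le> y" unfolding G_def quantile_def by (rule cInf_lower[OF _ q_bdd[OF assms(1)]])
      then show False using y by simp
    qed
  qed simp
  then show ?thesis unfolding G_def[symmetric]
    by (intro tendsto_upperbound[OF cdf_at_left]) auto
qed

lemma q_mono: assumes "0 < u" "u \<le> w" "w < 1" shows "quantile M u \<le> quantile M w"
  unfolding quantile_def
  by (rule cInf_superset_mono[OF q_ne[OF assms(3)] q_bdd[OF assms(1)]]) (use assms in auto)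

end

definition rr :: "real measure \<Rightarrow> real \<Rightarrow> real \<Rightarrow> real" where
  "rr M u x = indicator {..<quantile M u} x +
     (if x = quantile M u then (u - measure M {..<quantile M u}) / measure M {quantile M u} else 0)"

context real_distribution
begin

lemma c_bounds:
  assumes "0 < u" "u < 1"
  shows "0 \<le> u - measure M {..<quantile M u}"
    and "u - measure M {..<quantile M u} \<le> measure M {quantile M u}"
proof -
  define G where "G = quantile M u"
  have "measure M ({..<G} \<union> {G}) = measure M {..<G} + measure M {G}"
    by (rule finite_measure_Union) auto
  moreover have "{..<G} \<union> {G} = {..G}" by auto
  ultimately have "measure M {..G} = measure M {..<G} + measure M {G}" by simp
  then show "0 \<le> u - measure M {..<quantile M u}"
    and "u - measure M {..<quantile M u} \<le> measure M {quantile M u}"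
    using q_left[OF assms] q_cdf_ge[OF assms] unfolding G_def by auto
qed

lemma rr_bounds:
  assumes "0 < u" "u < 1"
  shows "0 \<le> rr M u x" "rr M u x \<le> 1"
proof -
  note c = c_bounds[OF assms]
  have "(u - measure M {..<quantile M u}) / measure M {quantile M u} \<le> 1"
    using c by (cases "measure M {quantile M u} = 0") auto
  moreover have "0 \<le> (u - measure M {..<quantile M u}) / measure M {quantile M u}"
    using c by simp
  ultimately show "0 \<le> rr M u x" "rr M u x \<le> 1" unfolding rr_def by (auto simp: indicator_def)
qed

lemma rr_measurable[measurable]: "rr M u \<in> borel_measurable M"
  unfolding rr_def by measurable

lemma mu_u_density:
  assumes "0 < u" "u < 1"
  shows "mu_u M u = density M (\<lambda>x. ennreal (rr M u x))"
proof -
  define G where "G = quantile M u"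
  define c where "c = u - measure M {..<G}"
  define m where "m = measure M {G}"
  have c: "0 \<le> c" "c \<le> m" using c_bounds[OF assms] unfolding c_def m_def G_def by auto
  have cm: "(c / m) * m = c" using c by (cases "m = 0") auto
  have "density M (\<lambda>x. ennreal (rr M u x)) =
      measure_of UNIV (sets borel) (emeasure (density M (\<lambda>x. ennreal (rr M u x))))"
    using measure_of_of_measure[of "density M (\<lambda>x. ennreal (rr M u x))"] by simp
  also have "\<dots> = mu_u M u"
    unfolding mu_u_def
  proof (rule measure_of_eq)
    show "sets borel \<subseteq> Pow UNIV" by simp
    fix A :: "real set" assume "A \<in> sigma_sets UNIV (sets borel)"
    then have A[measurable]: "A \<in> sets borel"
      by (metis sets.sigma_sets_eq space_borel)
    have "emeasure (density M (\<lambda>x. ennreal (rr M u x))) A = (\<integral>\<^sup>+ x. ennreal (rr M u x) * indicator A x \<partial>M)"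
      by (rule emeasure_density) auto
    also have "\<dots> = (\<integral>\<^sup>+ x. indicator (A \<inter> {..<G}) x + ennreal (c / m) * indicator (A \<inter> {G}) x \<partial>M)"
      by (intro nn_integral_cong) (auto simp: rr_def indicator_def G_def c_def m_def)
    also have "\<dots> = emeasure M (A \<inter> {..<G}) + ennreal (c / m) * emeasure M (A \<inter> {G})"
      by (subst nn_integral_add) (auto simp: nn_integral_cmult_indicator)
    also have "ennreal (c / m) * emeasure M (A \<inter> {G}) = ennreal (c * indicator A G)"
    proof (cases "G \<in> A")
      case True
      then have "A \<inter> {G} = {G}" by auto
      then have "ennreal (c / m) * emeasure M (A \<inter> {G}) = ennreal (c / m) * ennreal m"
        by (simp add: emeasure_eq_measure m_def)
      also have "\<dots> = ennreal c" using c cm by (simp add: ennreal_mult[symmetric])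
      finally show ?thesis using True by simp
    next
      case False
      then have "A \<inter> {G} = {}" by auto
      then show ?thesis using False by simp
    qed
    finally show "emeasure (density M (\<lambda>x. ennreal (rr M u x))) A =
        emeasure M (A \<inter> {..<quantile M u}) + ennreal ((u - measure M {..<quantile M u}) * indicator A (quantile M u))"
      unfolding G_def c_def by simp
  qed
  finally show ?thesis by simp
qed

lemma integral_rr:
  assumes "0 < u" "u < 1"
  shows "integral\<^sup>L M (rr M u) = u"
proof -
  define G where "G = quantile M u"
  define c where "c = u - measure M {..<G}"
  define m where "m = measure M {G}"
  have c: "0 \<le> c" "c \<le> m" using c_bounds[OF assms] unfolding c_def m_def G_def by auto
  have cm: "(c / m) * m = c" using c by (cases "m = 0") auto
  have "rr M u = (\<lambda>x. indicator {..<G} x + (c / m) * indicator {G} x)"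
    by (auto simp: rr_def G_def c_def m_def indicator_def fun_eq_iff)
  then have "integral\<^sup>L M (rr M u) = integral\<^sup>L M (\<lambda>x. indicator {..<G} x + (c / m) * indicator {G} x)" by simp
  also have "\<dots> = integral\<^sup>L M (indicator {..<G}) + integral\<^sup>L M (\<lambda>x. (c / m) * indicator {G} x)"
    by (rule Bochner_Integration.integral_add) (auto intro!: integrable_real_indicator simp: emeasure_eq_measure)
  also have "\<dots> = measure M {..<G} + (c / m) * measure M {G}"
    by simp
  finally show ?thesis using cm unfolding m_def c_def by simp
qed

lemma rr_mono:
  assumes "0 < u" "u \<le> w" "w < 1"
  shows "rr M u x \<le> rr M w x"
proof -
  have u1: "u < 1" using assms by simp
  have w0: "0 < w" using assms by simp
  note bu = rr_bounds[OF assms(1) u1] and bw = rr_bounds[OF w0 assms(3)]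
  have G: "quantile M u \<le> quantile M w" by (rule q_mono[OF assms])
  show ?thesis
  proof (cases "quantile M u = quantile M w")
    case True
    have "(u - measure M {..<quantile M u}) / measure M {quantile M u}
      \<le> (w - measure M {..<quantile M u}) / measure M {quantile M u}"
      using assms by (intro divide_right_mono) auto
    then show ?thesis unfolding rr_def True by (auto simp: indicator_def)
  next
    case False
    then have lt: "quantile M u < quantile M w" using G by simp
    show ?thesis
    proof (cases "x < quantile M w")
      case True
      then have "rr M w x = 1" unfolding rr_def by (auto simp: indicator_def)
      then show ?thesis using bu by simp
    next
      case False
      then have "rr M u x = 0" using lt unfolding rr_def by (auto simp: indicator_def)
      then show ?thesis using bw by simp
    qed
  qed
qed

lemma put_price_mu:
  assumes "0 < u" "u < 1"
  shows "put_price (mu_u M u) k = integral\<^sup>L M (\<lambda>x. rr M u x * max (k - x) 0)"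
  unfolding put_price_def mu_u_density[OF assms]
  by (subst integral_density) (auto simp: rr_bounds[OF assms])

end



lemma rpf_dist: "real_prob_fm M \<Longrightarrow> real_distribution M"
  unfolding real_prob_fm_def real_distribution_def real_distribution_axioms_def by auto

lemma rpf_int: "real_prob_fm M \<Longrightarrow> integrable M (\<lambda>x. x)"
  unfolding real_prob_fm_def by auto

lemma int_abs_plus:
  assumes "real_prob_fm M" shows "integrable M (\<lambda>x. c + \<bar>x\<bar>)"
proof -
  interpret real_distribution M using rpf_dist[OF assms] .
  show ?thesis using rpf_int[OF assms] by auto
qed

lemma int_put:
  assumes "real_prob_fm M" shows "integrable M (\<lambda>x. max (k - x) 0)"
proof -
  interpret real_distribution M using rpf_dist[OF assms] .
  show ?thesis
    by (rule Bochner_Integration.integrable_bound[OF int_abs_plus[OF assms, of "\<bar>k\<bar>"]]) auto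
qed

lemma int_rr_put:
  assumes "real_prob_fm M" "0 < u" "u < 1"
  shows "integrable M (\<lambda>x. rr M u x * max (k - x) 0)"
proof -
  interpret real_distribution M using rpf_dist[OF assms(1)] .
  show ?thesis
  proof (rule Bochner_Integration.integrable_bound[OF int_put[OF assms(1), of k]])
    show "AE x in M. norm (rr M u x * max (k - x) 0) \<le> norm (max (k - x) 0)"
      using rr_bounds[OF assms(2,3)] by (auto simp: abs_mult intro!: mult_left_le_one_le)
  qed auto
qed

lemma int_rr_x:
  assumes "real_prob_fm M" "0 < u" "u < 1"
  shows "integrable M (\<lambda>x. rr M u x * x)"
proof -
  interpret real_distribution M using rpf_dist[OF assms(1)] .
  show ?thesis
  proof (rule Bochner_Integration.integrable_bound[OF rpf_int[OF assms(1)]])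
    show "AE x in M. norm (rr M u x * x) \<le> norm x"
      using rr_bounds[OF assms(2,3)] by (auto simp: abs_mult intro!: mult_left_le_one_le)
  qed auto
qed

lemma int_rr:
  assumes "real_prob_fm M" "0 < u" "u < 1"
  shows "integrable M (rr M u)"
proof -
  interpret real_distribution M using rpf_dist[OF assms(1)] .
  show ?thesis
    by (rule integrable_const_bound[where B=1]) (use rr_bounds[OF assms(2,3)] in auto)
qed

lemma convex_put: "convex_on UNIV (\<lambda>x::real. max (k - x) 0)"
proof (rule convex_on_linorderI)
  fix t x y :: real assume t: "0 < t" "t < 1"
  have 1: "(1 - t) * (k - x) \<le> (1 - t) * max (k - x) 0" using t by (intro mult_left_mono) auto
  have 2: "t * (k - y) \<le> t * max (k - y) 0" using t by (intro mult_left_mono) auto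
  have 3: "0 \<le> (1 - t) * max (k - x) 0 + t * max (k - y) 0" using t by auto
  have "k - ((1 - t) * x + t * y) = (1 - t) * (k - x) + t * (k - y)" by (simp add: algebra_simps)
  then show "max (k - ((1 - t) *\<^sub>R x + t *\<^sub>R y)) 0 \<le> (1 - t) * max (k - x) 0 + t * max (k - y) 0"
    using 1 2 3 by simp
qed auto

locale setting =
  fixes \<mu> \<nu> :: "real measure"
  assumes mu: "real_prob_fm \<mu>" and nu: "real_prob_fm \<nu>" and cx: "convex_order \<mu> \<nu>"
begin

interpretation Mu: real_distribution \<mu> using rpf_dist[OF mu] .

lemma E_eq: "0 < u \<Longrightarrow> u < 1 \<Longrightarrow>
  E_u \<mu> \<nu> u k = put_price \<nu> k - integral\<^sup>L \<mu> (\<lambda>x. rr \<mu> u x * max (k - x) 0)"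
  unfolding E_u_def by (simp add: Mu.put_price_mu)

lemma E_nonneg:
  assumes "0 < u" "u < 1" shows "0 \<le> E_u \<mu> \<nu> u k"
proof -
  have "integral\<^sup>L \<mu> (\<lambda>x. rr \<mu> u x * max (k - x) 0) \<le> integral\<^sup>L \<mu> (\<lambda>x. max (k - x) 0)"
    using Mu.rr_bounds[OF assms]
    by (intro integral_mono int_rr_put[OF mu assms] int_put[OF mu]) (auto intro!: mult_left_le_one_le)
  also have "\<dots> \<le> integral\<^sup>L \<nu> (\<lambda>x. max (k - x) 0)"
    using cx convex_put int_put[OF mu] int_put[OF nu] unfolding convex_order_def by blast
  finally show ?thesis unfolding E_eq[OF assms] put_price_def by simp
qed

lemma E_minorant: "0 < u \<Longrightarrow> u < 1 \<Longrightarrow> has_minorant (E_u \<mu> \<nu> u)"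
  unfolding has_minorant_def
  using E_nonneg affine_convex[of 0 0] by (intro exI[of _ "\<lambda>_. 0"]) auto

lemma E_lip:
  assumes u: "0 < u" "u \<le> w" "w < 1" and jk: "j \<le> k"
  shows "(E_u \<mu> \<nu> u k - E_u \<mu> \<nu> w k) - (E_u \<mu> \<nu> u j - E_u \<mu> \<nu> w j) \<le> (w - u) * (k - j)"
proof -
  have u1: "u < 1" and w0: "0 < w" using u by auto
  note iu = int_rr_put[OF mu u(1) u1] and iw = int_rr_put[OF mu w0 u(3)]
  note ru = int_rr[OF mu u(1) u1] and rw = int_rr[OF mu w0 u(3)]
  define Q where "Q v t = integral\<^sup>L \<mu> (\<lambda>x. rr \<mu> v x * max (t - x) 0)" for v t
  have "(E_u \<mu> \<nu> u k - E_u \<mu> \<nu> w k) - (E_u \<mu> \<nu> u j - E_u \<mu> \<nu> w j) = (Q w k - Q u k) - (Q w j - Q u j)"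
    unfolding E_eq[OF u(1) u1] E_eq[OF w0 u(3)] Q_def by simp
  also have "\<dots> = integral\<^sup>L \<mu> (\<lambda>x. (rr \<mu> w x * max (k - x) 0 - rr \<mu> u x * max (k - x) 0)
       - (rr \<mu> w x * max (j - x) 0 - rr \<mu> u x * max (j - x) 0))"
    unfolding Q_def using iu iw
    by (simp add: Bochner_Integration.integral_diff)
  also have "\<dots> \<le> integral\<^sup>L \<mu> (\<lambda>x. (k - j) * rr \<mu> w x - (k - j) * rr \<mu> u x)"
  proof (rule integral_mono)
    show "integrable \<mu> (\<lambda>x. (rr \<mu> w x * max (k - x) 0 - rr \<mu> u x * max (k - x) 0)
       - (rr \<mu> w x * max (j - x) 0 - rr \<mu> u x * max (j - x) 0))" using iu iw by auto
    show "integrable \<mu> (\<lambda>x. (k - j) * rr \<mu> w x - (k - j) * rr \<mu> u x)" using ru rw by auto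
    fix x
    have d: "0 \<le> rr \<mu> w x - rr \<mu> u x" using Mu.rr_mono[OF u] by simp
    have e: "max (k - x) 0 - max (j - x) 0 \<le> k - j" using jk by auto
    have "(rr \<mu> w x - rr \<mu> u x) * (max (k - x) 0 - max (j - x) 0) \<le> (rr \<mu> w x - rr \<mu> u x) * (k - j)"
      by (rule mult_left_mono[OF e d])
    then show "(rr \<mu> w x * max (k - x) 0 - rr \<mu> u x * max (k - x) 0)
       - (rr \<mu> w x * max (j - x) 0 - rr \<mu> u x * max (j - x) 0) \<le> (k - j) * rr \<mu> w x - (k - j) * rr \<mu> u x"
      by (simp add: algebra_simps)
  qed
  also have "\<dots> = (k - j) * integral\<^sup>L \<mu> (rr \<mu> w) - (k - j) * integral\<^sup>L \<mu> (rr \<mu> u)"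
    using ru rw by (simp add: Bochner_Integration.integral_diff)
  also have "\<dots> = (w - u) * (k - j)"
    using Mu.integral_rr[OF u(1) u1] Mu.integral_rr[OF w0 u(3)] by (simp add: algebra_simps)
  finally show ?thesis .
qed

interpretation Nu: real_distribution \<nu> using rpf_dist[OF nu] .

lemma phi_swap:
  assumes u: "0 < u" "u \<le> w" "w < 1"
  shows "phi \<mu> \<nu> u \<le> phi \<mu> \<nu> w + (w - u)"
proof -
  have u1: "u < 1" and w0: "0 < w" using u by auto
  show ?thesis
    unfolding phi_def using u1 u(3) u(2)
    by (auto intro!: swap E_minorant[OF u(1) u1] E_minorant[OF w0 u(3)] Mu.q_mono[OF u] E_lip[OF u])
qed

lemma P_nu_upper:
  assumes "0 \<le> y" shows "put_price \<nu> y \<le> y + integral\<^sup>L \<nu> (\<lambda>x. \<bar>x\<bar>)"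
proof -
  have "put_price \<nu> y \<le> integral\<^sup>L \<nu> (\<lambda>x. y + \<bar>x\<bar>)"
    unfolding put_price_def using assms
    by (intro integral_mono int_put[OF nu] int_abs_plus[OF nu]) auto
  also have "\<dots> = y + integral\<^sup>L \<nu> (\<lambda>x. \<bar>x\<bar>)"
    using rpf_int[OF nu] Nu.prob_space by (subst Bochner_Integration.integral_add) auto
  finally show ?thesis .
qed

lemma Q_lower:
  assumes u: "0 < u" "u < 1"
  shows "u * y - integral\<^sup>L \<mu> (\<lambda>x. rr \<mu> u x * x) \<le> integral\<^sup>L \<mu> (\<lambda>x. rr \<mu> u x * max (y - x) 0)"
proof -
  note ir = int_rr[OF mu u] and ix = int_rr_x[OF mu u]
  have "u * y - integral\<^sup>L \<mu> (\<lambda>x. rr \<mu> u x * x) = integral\<^sup>L \<mu> (\<lambda>x. y * rr \<mu> u x - rr \<mu> u x * x)"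
    using ir ix Mu.integral_rr[OF u] by (simp add: Bochner_Integration.integral_diff)
  also have "\<dots> \<le> integral\<^sup>L \<mu> (\<lambda>x. rr \<mu> u x * max (y - x) 0)"
  proof (rule integral_mono)
    show "integrable \<mu> (\<lambda>x. y * rr \<mu> u x - rr \<mu> u x * x)" using ir ix by auto
    show "integrable \<mu> (\<lambda>x. rr \<mu> u x * max (y - x) 0)" by (rule int_rr_put[OF mu u])
    fix x
    have "rr \<mu> u x * (y - x) \<le> rr \<mu> u x * max (y - x) 0"
      using Mu.rr_bounds[OF u] by (intro mult_left_mono) auto
    then show "y * rr \<mu> u x - rr \<mu> u x * x \<le> rr \<mu> u x * max (y - x) 0" by (simp add: algebra_simps)
  qed
  finally show ?thesis .
qed

lemma phi_le:
  assumes u: "0 < u" "u < 1"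
  shows "phi \<mu> \<nu> u \<le> 1 - u"
proof (rule ccontr)
  define g where "g = convex_minorant (E_u \<mu> \<nu> u)"
  define a where "a = quantile \<mu> u"
  define \<sigma> where "\<sigma> = phi \<mu> \<nu> u"
  define C where "C = integral\<^sup>L \<nu> (\<lambda>x. \<bar>x\<bar>) + integral\<^sup>L \<mu> (\<lambda>x. rr \<mu> u x * x)"
  assume "\<not> ?thesis"
  then have lt: "0 < \<sigma> - (1 - u)" unfolding \<sigma>_def by simp
  have "\<sigma> = Inf (subdiff g a)" unfolding \<sigma>_def phi_def g_def a_def using u by simp
  then have s: "\<sigma> \<in> subdiff g a" using Inf_subdiff[OF cm_convex[OF E_minorant[OF u]]] unfolding g_def by simp
  have bound: "g a + \<sigma> * (y - a) \<le> (1 - u) * y + C" if "0 \<le> y" for y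
  proof -
    have "g a + \<sigma> * (y - a) \<le> g y" using s by (simp add: subdiff_iff)
    also have "\<dots> \<le> E_u \<mu> \<nu> u y" unfolding g_def by (rule cm_le[OF E_minorant[OF u]])
    also have "\<dots> \<le> (1 - u) * y + C"
      unfolding E_eq[OF u] C_def using P_nu_upper[OF that] Q_lower[OF u, of y]
      by (simp add: algebra_simps)
    finally show ?thesis .
  qed
  define y where "y = max 0 ((C - g a + \<sigma> * a + 1) / (\<sigma> - (1 - u)))"
  have y0: "0 \<le> y" unfolding y_def by simp
  have "(C - g a + \<sigma> * a + 1) / (\<sigma> - (1 - u)) \<le> y" unfolding y_def by simp
  then have "C - g a + \<sigma> * a + 1 \<le> y * (\<sigma> - (1 - u))" using lt by (simp add: divide_le_eq)
  moreover have "g a + \<sigma> * (y - a) \<le> (1 - u) * y + C" by (rule bound[OF y0])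
  ultimately show False by (simp add: algebra_simps)
qed

end

theorem lemma7p3:
  fixes \<mu> \<nu> :: "real measure" and v x :: real
  assumes "real_prob_fm \<mu>" and "real_prob_fm \<nu>"
    and "convex_order \<mu> \<nu>"
    and "is_interval {k. put_price \<nu> k - put_price \<mu> k > 0}"
    and "0 < v" and "v < 1"
    and "phi \<mu> \<nu> v \<le> x" and "x \<le> phi_plus \<mu> \<nu> v"
  shows "(\<forall>a b. v \<le> a \<longrightarrow> a \<le> b \<longrightarrow> b \<le> 1 \<longrightarrow> psi \<mu> \<nu> v x b \<le> psi \<mu> \<nu> v x a)
       \<and> abs_continuous_on v 1 (psi \<mu> \<nu> v x)"
proof -
  interpret setting \<mu> \<nu> using assms(1-3) by unfold_locales
  have P: "phi \<mu> \<nu> u \<le> phi \<mu> \<nu> w + (w - u)" if "v \<le> u" "u \<le> w" "w \<le> 1" for u w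
  proof (cases "w = 1")
    case True
    show ?thesis
    proof (cases "u = 1")
      case False
      then have "phi \<mu> \<nu> u \<le> 1 - u" using that assms(5) True by (intro phi_le) auto
      then show ?thesis using True by (simp add: phi_def)
    qed (use True in simp)
  next
    case False
    then show ?thesis using that assms(5) by (intro phi_swap) auto
  qed
  show ?thesis
    by (rule final_part[OF assms(5,6) P]) (use assms(8) in \<open>auto simp: phi_plus_def psi_def\<close>)
qed


end
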